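(* Let $r\ge2$ and $p\ge2$ be integers, $\mathcal{A}$ the adjacency tensor of an $r$-uniform (possibly weighted) hypergraph on $n$ vertices, and $f(\mathbf{x})=(r-1)!\,\mathcal{A}\mathbf{x}^r/\|\mathbf{x}\|_p^r$. Let $\mathbf{x}_k$ be an iterate of the CSRH iteration (described in the context) with $\nabla f(\mathbf{x}_k)\neq0$, and let $\mathbf{p}_k$ be the corresponding search direction. If $0<c_1<c_2<1$, then there exists $\alpha_k>0$ such that $$f(\mathbf{x}_{k+1}(\alpha_k))\ge f(\mathbf{x}_k)+c_1\alpha_k\nabla f(\mathbf{x}_k)^\top\mathbf{p}_k,\qquad \nabla f(\mathbf{x}_{k+1}(\alpha_k))^\top\mathbf{p}_k\le c_2\nabla f(\mathbf{x}_k)^\top\mathbf{p}_k,$$ where $$\mathbf{x}_{k+1}(\alpha)=\frac{[(2-\alpha\mathbf{x}_k^\top\mathbf{p}_k)^2-\|\alpha\mathbf{p}_k\|^2]\mathbf{x}_k+4\alpha\mathbf{p}_k}{4+\|\alpha\mathbf{p}_k\|^2-(\alpha\mathbf{x}_k^\top\mathbf{p}_k)^2}.$$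
   Context: Adjacency tensor: for a weighted $r$-uniform hypergraph with vertex set $\{1,\dots,n\}$ and edge weights $s(e)>0$, $\mathcal{A}=(a_{i_1\cdots i_r})$ is symmetric with $a_{i_1\cdots i_r}=s(e)/(r-1)!$ if $\{i_1,\dots,i_r\}=e$ is an edge and $0$ otherwise; $\mathcal{A}\mathbf{x}^r=\sum a_{i_1\cdots i_r}x_{i_1}\cdots x_{i_r}$, $(\mathcal{A}\mathbf{x}^{r-1})_i=\sum a_{ii_2\cdots i_r}x_{i_2}\cdots x_{i_r}$, $\|\mathbf{x}\|_p=(\sum|x_i|^p)^{1/p}$, $\|\cdot\|$ Euclidean. $\nabla f(\mathbf{x})=\frac{r!}{\|\mathbf{x}\|_p^r}(\mathcal{A}\mathbf{x}^{r-1}-\mathcal{A}\mathbf{x}^r\|\mathbf{x}\|_p^{-p}\mathbf{x}^{\langle p-1\rangle})$ with $(\mathbf{x}^{\langle p-1\rangle})_i=|x_i|^{p-1}\mathrm{sgn}(x_i)$. CSRH iteration: fix $0<c_1<c_2<1$, $\tfrac14<\tau<1$, $\epsilon>0$, a unit vector $\mathbf{x}_0$, and $\mathbf{p}_0=\nabla f(\mathbf{x}_0)$. At step $k$, choose $\alpha_k>0$ satisfying the two (Wolfe) inequalities $f(\mathbf{x}_{k+1}(\alpha_k))\ge f(\mathbf{x}_k)+c_1\alpha_k\nabla f(\mathbf{x}_k)^\top\mathbf{p}_k$ and $\nabla f(\mathbf{x}_{k+1}(\alpha_k))^\top\mathbf{p}_k\le c_2\nabla f(\mathbf{x}_k)^\top\mathbf{p}_k$,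 with $\mathbf{x}_{k+1}(\alpha)$ given by the displayed formula; set $\mathbf{x}_{k+1}=\mathbf{x}_{k+1}(\alpha_k)$, $\mathbf{d}_k=\mathbf{x}_{k+1}-\mathbf{x}_k$, $\mathbf{y}_k=\nabla f(\mathbf{x}_{k+1})-\nabla f(\mathbf{x}_k)$, $\beta_k=\max(0,\tilde\beta_k)$ where $\tilde\beta_k=(\tau\mathbf{d}_k\|\mathbf{y}_k\|^2/(\mathbf{d}_k^\top\mathbf{y}_k)-\mathbf{y}_k)^\top\nabla f(\mathbf{x}_{k+1})/(\mathbf{d}_k^\top\mathbf{y}_k)$ if $|\mathbf{d}_k^\top\mathbf{y}_k|\ge\epsilon\|\mathbf{d}_k\|\|\mathbf{y}_k\|$ and $\tilde\beta_k=0$ otherwise, and $\mathbf{p}_{k+1}=\nabla f(\mathbf{x}_{k+1})+\beta_k\mathbf{d}_k$. All iterates are unit vectors. *)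

theory Defs
  imports "HOL-Analysis.Analysis"
begin

text \<open>Vertices of the hypergraph are the elements of a finite type 'n (playing the role of
  {1..n}); vectors in R^n are elements of real^'n.\<close>

definition uniform_weighted_hypergraph :: "nat \<Rightarrow> 'n::finite set set \<Rightarrow> ('n set \<Rightarrow> real) \<Rightarrow> bool" where
  "uniform_weighted_hypergraph r E s \<longleftrightarrow> (\<forall>e\<in>E. card e = r \<and> s e > 0)"

definition adj_tensor :: "nat \<Rightarrow> 'n::finite set set \<Rightarrow> ('n set \<Rightarrow> real) \<Rightarrow> 'n list \<Rightarrow> real" where
  "adj_tensor r E s is = (if length is = r \<and> set is \<in> E then s (set is) / fact (r - 1) else 0)"

definition tensor_form :: "('n::finite list \<Rightarrow> real) \<Rightarrow> nat \<Rightarrow> real^'n \<Rightarrow> real" where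
  "tensor_form a r x = (\<Sum>is\<in>{is. length is = r}. a is * (\<Prod>j<r. x $ (is ! j)))"

definition tensor_vec :: "('n::finite list \<Rightarrow> real) \<Rightarrow> nat \<Rightarrow> real^'n \<Rightarrow> real^'n" where
  "tensor_vec a r x = (\<chi> i. \<Sum>js\<in>{js. length js = r - 1}. a (i # js) * (\<Prod>j<r - 1. x $ (js ! j)))"

definition pnorm :: "nat \<Rightarrow> real^'n::finite \<Rightarrow> real" where
  "pnorm p x = (\<Sum>i\<in>UNIV. \<bar>x $ i\<bar> ^ p) powr (1 / real p)"

definition sgnpow :: "nat \<Rightarrow> real^'n::finite \<Rightarrow> real^'n" where
  "sgnpow p x = (\<chi> i. \<bar>x $ i\<bar> ^ (p - 1) * sgn (x $ i))"

definition fobj :: "nat \<Rightarrow> nat \<Rightarrow> 'n::finite set set \<Rightarrow> ('n set \<Rightarrow> real) \<Rightarrow> real^'n \<Rightarrow> real" where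
  "fobj r p E s x = fact (r - 1) * tensor_form (adj_tensor r E s) r x / pnorm p x ^ r"

definition gradf :: "nat \<Rightarrow> nat \<Rightarrow> 'n::finite set set \<Rightarrow> ('n set \<Rightarrow> real) \<Rightarrow> real^'n \<Rightarrow> real^'n" where
  "gradf r p E s x = (fact r / pnorm p x ^ r) *\<^sub>R
     (tensor_vec (adj_tensor r E s) r x
      - (tensor_form (adj_tensor r E s) r x * pnorm p x powr (- real p)) *\<^sub>R sgnpow p x)"

definition xnext :: "real^'n::finite \<Rightarrow> real^'n \<Rightarrow> real \<Rightarrow> real^'n" where
  "xnext x d \<alpha> = (1 / (4 + norm (\<alpha> *\<^sub>R d) ^ 2 - (\<alpha> * (x \<bullet> d)) ^ 2)) *\<^sub>R
     (((2 - \<alpha> * (x \<bullet> d)) ^ 2 - norm (\<alpha> *\<^sub>R d) ^ 2) *\<^sub>R x + (4 * \<alpha>) *\<^sub>R d)"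

definition wolfe :: "(real^'n::finite \<Rightarrow> real) \<Rightarrow> (real^'n \<Rightarrow> real^'n) \<Rightarrow> real \<Rightarrow> real
    \<Rightarrow> real^'n \<Rightarrow> real^'n \<Rightarrow> real \<Rightarrow> bool" where
  "wolfe f g c1 c2 x d \<alpha> \<longleftrightarrow>
     f (xnext x d \<alpha>) \<ge> f x + c1 * \<alpha> * (g x \<bullet> d) \<and>
     g (xnext x d \<alpha>) \<bullet> d \<le> c2 * (g x \<bullet> d)"

definition csrh_beta :: "real \<Rightarrow> real \<Rightarrow> real^'n::finite \<Rightarrow> real^'n \<Rightarrow> real^'n \<Rightarrow> real" where
  "csrh_beta \<tau> \<epsilon> d y g1 =
     max 0 (if \<bar>d \<bullet> y\<bar> \<ge> \<epsilon> * norm d * norm y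
            then ((\<tau> * norm y ^ 2 / (d \<bullet> y)) *\<^sub>R d - y) \<bullet> g1 / (d \<bullet> y)
            else 0)"

text \<open>x, p, alpha are the first k+1 iterates / directions and first k step sizes of a CSRH run.\<close>
definition csrh_run :: "(real^'n::finite \<Rightarrow> real) \<Rightarrow> (real^'n \<Rightarrow> real^'n) \<Rightarrow> real \<Rightarrow> real \<Rightarrow> real \<Rightarrow> real
    \<Rightarrow> (nat \<Rightarrow> real^'n) \<Rightarrow> (nat \<Rightarrow> real^'n) \<Rightarrow> (nat \<Rightarrow> real) \<Rightarrow> nat \<Rightarrow> bool" where
  "csrh_run f g c1 c2 \<tau> \<epsilon> x p \<alpha> k \<longleftrightarrow>
     0 < c1 \<and> c1 < c2 \<and> c2 < 1 \<and> 1/4 < \<tau> \<and> \<tau> < 1 \<and> 0 < \<epsilon> \<and>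
     norm (x 0) = 1 \<and> p 0 = g (x 0) \<and>
     (\<forall>j<k. 0 < \<alpha> j \<and> wolfe f g c1 c2 (x j) (p j) (\<alpha> j) \<and>
        x (Suc j) = xnext (x j) (p j) (\<alpha> j) \<and>
        p (Suc j) = g (x (Suc j)) +
          csrh_beta \<tau> \<epsilon> (x (Suc j) - x j) (g (x (Suc j)) - g (x j)) (g (x (Suc j))) *\<^sub>R (x (Suc j) - x j))"

end

theory Submission
  imports Defs
begin


lemma fin_lists: "finite {is::'n::finite list. length is = m}"
  using finite_lists_length_eq[of "UNIV::'n set" m] by simp

lemma sum_lists_Suc:
  fixes F :: "'n::finite list \<Rightarrow> real"
  shows "(\<Sum>is\<in>{is. length is = Suc m}. F is) = (\<Sum>i\<in>UNIV. \<Sum>js\<in>{js. length js = m}. F (i # js))"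
proof -
  have "(\<Sum>is\<in>{is. length is = Suc m}. F is) = (\<Sum>p\<in>UNIV \<times> {js. length js = m}. F (fst p # snd p))"
    by (rule sum.reindex_bij_witness[of _ "\<lambda>p. fst p # snd p" "\<lambda>is. (hd is, tl is)"])
       (auto simp: length_Suc_conv)
  also have "\<dots> = (\<Sum>i\<in>UNIV. \<Sum>js\<in>{js. length js = m}. F (i # js))"
    by (subst sum.cartesian_product) (simp add: case_prod_beta)
  finally show ?thesis .
qed



lemma tensor_euler:
  fixes a :: "'n::finite list \<Rightarrow> real"
  shows "tensor_vec a (Suc m) x \<bullet> x = tensor_form a (Suc m) x"
proof -
  have "tensor_form a (Suc m) x = (\<Sum>i\<in>UNIV. \<Sum>js\<in>{js. length js = m}. a (i # js) * (\<Prod>j<Suc m. x $ ((i#js) ! j)))"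
    unfolding tensor_form_def by (rule sum_lists_Suc)
  also have "\<dots> = (\<Sum>i\<in>UNIV. x $ i * (\<Sum>js\<in>{js. length js = m}. a (i # js) * (\<Prod>j<m. x $ (js ! j))))"
  proof -
    have "(\<Prod>j<Suc m. x $ ((i#js) ! j)) = x $ i * (\<Prod>j<m. x $ (js ! j))" for i js
      by (simp only: prod.lessThan_Suc_shift) simp
    then show ?thesis by (simp add: sum_distrib_left algebra_simps)
  qed
  finally show ?thesis by (simp add: inner_vec_def tensor_vec_def mult.commute)
qed

definition swl :: "nat \<Rightarrow> 'a list \<Rightarrow> 'a list" where
  "swl j xs = xs[0 := xs ! j, j := xs ! 0]"

definition tau :: "nat \<Rightarrow> nat \<Rightarrow> nat" where
  "tau j l = (if l = 0 then j else if l = j then 0 else l)"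

lemma swl_nth: assumes "l < length xs" "j < length xs" shows "swl j xs ! l = xs ! tau j l"
  unfolding swl_def tau_def using assms by (auto simp: nth_list_update)

lemma swl_len[simp]: "length (swl j xs) = length xs"
  by (simp add: swl_def)

lemma swl_swl: assumes "j < length xs" shows "swl j (swl j xs) = xs"
proof (rule nth_equalityI)
  show "length (swl j (swl j xs)) = length xs" by simp
  fix l assume "l < length (swl j (swl j xs))"
  then have l: "l < length xs" by simp
  have "tau j l < length xs" using l assms by (cases xs) (auto simp: tau_def)
  then have "swl j (swl j xs) ! l = xs ! tau j (tau j l)"
    using swl_nth[of "tau j l" xs j] swl_nth[of l "swl j xs" j] l assms by simp
  also have "tau j (tau j l) = l" by (simp add: tau_def)
  finally show "swl j (swl j xs) ! l = xs ! l" .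
qed

lemma swl_mset: "j < length xs \<Longrightarrow> mset (swl j xs) = mset xs"
proof -
  assume a: "j < length xs"
  then have "0 < length xs" by (cases xs) auto
  then show ?thesis unfolding swl_def using mset_swap[of j xs 0] a by (cases xs) auto
qed

lemma swap_term:
  fixes a :: "'n::finite list \<Rightarrow> real"
  assumes sym: "\<And>xs ys. mset xs = mset ys \<Longrightarrow> a xs = a ys" and j: "j < Suc m"
  shows "(\<Sum>is\<in>{is. length is = Suc m}. a is * (h $ (is ! j) * (\<Prod>l\<in>{..<Suc m} - {j}. x $ (is ! l))))
       = (\<Sum>is\<in>{is. length is = Suc m}. a is * (h $ (is ! 0) * (\<Prod>l\<in>{..<Suc m} - {0}. x $ (is ! l))))"
proof -
  have H: "a (swl j is) * (h $ (swl j is ! 0) * (\<Prod>l\<in>{..<Suc m} - {0}. x $ (swl j is ! l)))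
      = a is * (h $ (is ! j) * (\<Prod>l\<in>{..<Suc m} - {j}. x $ (is ! l)))"
    if L: "length is = Suc m" for "is" :: "'n list"
  proof -
  have A: "a (swl j is) = a is" using sym swl_mset L j by metis
  have B: "swl j is ! 0 = is ! j" using L j by (simp add: swl_nth tau_def)
  have C: "(\<Prod>l\<in>{..<Suc m} - {0}. x $ (swl j is ! l)) = (\<Prod>l\<in>{..<Suc m} - {j}. x $ (is ! l))"
  proof (rule prod.reindex_bij_witness[of _ "tau j" "tau j"])
    fix l assume "l \<in> {..<Suc m} - {j}"
    then show "tau j (tau j l) = l" "tau j l \<in> {..<Suc m} - {0}"
      using j by (auto simp: tau_def)
  next
    fix l assume "l \<in> {..<Suc m} - {0}"
    then show "tau j (tau j l) = l" "tau j l \<in> {..<Suc m} - {j}"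
      using j by (auto simp: tau_def)
    show "x $ (is ! tau j l) = x $ (swl j is ! l)" using \<open>l \<in> {..<Suc m} - {0}\<close> L j
      by (simp add: swl_nth)
  qed
  show ?thesis using A B C by simp
  qed
  show ?thesis
    by (rule sum.reindex_bij_witness[of _ "swl j" "swl j"]) (use j in \<open>auto simp: swl_swl H\<close>)
qed

lemma zero_term:
  fixes a :: "'n::finite list \<Rightarrow> real"
  shows "(\<Sum>is\<in>{is. length is = Suc m}. a is * (h $ (is ! 0) * (\<Prod>l\<in>{..<Suc m} - {0}. x $ (is ! l))))
       = tensor_vec a (Suc m) x \<bullet> h"
proof -
  have S: "{..<Suc m} - {0} = Suc ` {..<m}"
    unfolding lessThan_Suc_eq_insert_0 by auto
  have P: "(\<Prod>l\<in>{..<Suc m} - {0}. x $ ((i # js) ! l)) = (\<Prod>l<m. x $ (js ! l))" for i js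
    unfolding S by (simp add: prod.reindex)
  have "(\<Sum>is\<in>{is. length is = Suc m}. a is * (h $ (is ! 0) * (\<Prod>l\<in>{..<Suc m} - {0}. x $ (is ! l))))
     = (\<Sum>i\<in>UNIV. \<Sum>js\<in>{js. length js = m}. a (i # js) * (h $ i * (\<Prod>l<m. x $ (js ! l))))"
    by (simp only: sum_lists_Suc P nth_Cons_0)
  also have "\<dots> = (\<Sum>i\<in>UNIV. (\<Sum>js\<in>{js. length js = m}. a (i # js) * (\<Prod>l<m. x $ (js ! l))) * h $ i)"
    by (simp only: sum_distrib_right) (simp add: mult_ac)
  also have "\<dots> = tensor_vec a (Suc m) x \<bullet> h"
    by (simp add: inner_vec_def tensor_vec_def)
  finally show ?thesis .
qed

lemma tensor_deriv:
  fixes a :: "'n::finite list \<Rightarrow> real"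
  assumes sym: "\<And>xs ys. mset xs = mset ys \<Longrightarrow> a xs = a ys"
  shows "(tensor_form a (Suc m) has_derivative (\<lambda>h. real (Suc m) * (tensor_vec a (Suc m) x \<bullet> h))) (at x)"
proof -
  have D: "(tensor_form a (Suc m) has_derivative
      (\<lambda>h. \<Sum>is\<in>{is. length is = Suc m}. a is * (\<Sum>j<Suc m. h $ (is ! j) * (\<Prod>l\<in>{..<Suc m} - {j}. x $ (is ! l))))) (at x)"
    unfolding tensor_form_def
    by (intro has_derivative_sum has_derivative_mult_right has_derivative_prod bounded_linear_imp_has_derivative bounded_linear_vec_nth)
  have E: "(\<Sum>is\<in>{is. length is = Suc m}. a is * (\<Sum>j<Suc m. h $ (is ! j) * (\<Prod>l\<in>{..<Suc m} - {j}. x $ (is ! l))))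
        = real (Suc m) * (tensor_vec a (Suc m) x \<bullet> h)" for h
  proof -
    have "(\<Sum>is\<in>{is. length is = Suc m}. a is * (\<Sum>j<Suc m. h $ (is ! j) * (\<Prod>l\<in>{..<Suc m} - {j}. x $ (is ! l))))
      = (\<Sum>j<Suc m. \<Sum>is\<in>{is. length is = Suc m}. a is * (h $ (is ! j) * (\<Prod>l\<in>{..<Suc m} - {j}. x $ (is ! l))))"
      by (simp only: sum_distrib_left) (rule sum.swap)
    also have "\<dots> = (\<Sum>j<Suc m. tensor_vec a (Suc m) x \<bullet> h)"
      by (rule sum.cong[OF refl]) (simp add: swap_term[OF sym] zero_term)
    finally show ?thesis by simp
  qed
  show ?thesis using D unfolding E .
qed



definition Ssum :: "nat \<Rightarrow> real^'n::finite \<Rightarrow> real" where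
  "Ssum p x = (\<Sum>i\<in>UNIV. \<bar>x $ i\<bar> ^ p)"

lemma Ssum_nonneg: "0 \<le> Ssum p x"
  unfolding Ssum_def by (simp add: sum_nonneg)

lemma Ssum_pos: assumes "x \<noteq> 0" "p \<ge> 1" shows "0 < Ssum p x"
proof -
  obtain i where "x $ i \<noteq> 0" using assms(1) by (metis vec_eq_iff zero_index)
  then have "0 < \<bar>x $ i\<bar> ^ p" by simp
  moreover have "\<bar>x $ i\<bar> ^ p \<le> Ssum p x"
    unfolding Ssum_def by (rule member_le_sum) auto
  ultimately show ?thesis by linarith
qed

lemma abs_pow_deriv:
  assumes p: "p \<ge> 2"
  shows "((\<lambda>u::real. \<bar>u\<bar> ^ p) has_field_derivative real p * (\<bar>u\<bar> ^ (p - 1) * sgn u)) (at u)"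
proof (cases "u = 0")
  case True
  let ?g = "\<lambda>z::real. z * \<bar>z\<bar> ^ (p - 2)"
  have eq: "\<bar>z\<bar> ^ p - \<bar>u\<bar> ^ p = ?g z * (z - u)" for z
  proof -
    have pp: "p = (p - 2) + 2" using p by simp
    have "\<bar>z\<bar> ^ p = \<bar>z\<bar> ^ (p - 2) * \<bar>z\<bar>^2" by (subst pp) (simp only: power_add)
    then show ?thesis using True p by (simp add: power2_eq_square mult_ac)
  qed
  have c: "isCont ?g u" by (intro continuous_intros)
  have v: "?g u = real p * (\<bar>u\<bar> ^ (p - 1) * sgn u)" using True by simp
  show ?thesis unfolding CARAT_DERIV
    by (rule exI[of _ ?g]) (intro conjI allI eq c v)
next
  case False
  show ?thesis
  proof (cases "u > 0")
    case True
    have d: "((\<lambda>u::real. u ^ p) has_field_derivative real p * (\<bar>u\<bar> ^ (p - 1) * sgn u)) (at u)"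
      using DERIV_pow[of p u] True by simp
    have e: "x ^ p = \<bar>x\<bar> ^ p" if "x \<in> {0<..}" for x :: real
      using that by simp
    show ?thesis
      using has_field_derivative_transform_within_open[OF d, of "{0<..}", OF open_greaterThan _ e] True by simp
  next
    case False
    then have neg: "u < 0" using \<open>u \<noteq> 0\<close> by simp
    have d0: "((\<lambda>u::real. (- u) ^ p) has_field_derivative real p * (- u) ^ (p - 1) * (- 1)) (at u)"
      using DERIV_chain2[OF DERIV_pow[of p "-u"] DERIV_minus[OF DERIV_ident]] by simp
    have q: "real p * (- u) ^ (p - 1) * (- 1) = real p * (\<bar>u\<bar> ^ (p - 1) * sgn u)"
      using neg by simp
    have d: "((\<lambda>u::real. (- u) ^ p) has_field_derivative real p * (\<bar>u\<bar> ^ (p - 1) * sgn u)) (at u)"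
      using d0 unfolding q .
    have e: "(- x) ^ p = \<bar>x\<bar> ^ p" if "x \<in> {..<0}" for x :: real
      using that by simp
    show ?thesis
      using has_field_derivative_transform_within_open[OF d, of "{..<0}", OF open_lessThan _ e] neg by simp
  qed
qed

lemma Ssum_deriv:
  assumes p: "p \<ge> 2"
  shows "(Ssum p has_derivative (\<lambda>h. real p * (sgnpow p x \<bullet> h))) (at x)"
proof -
  have "((\<lambda>x. \<Sum>i\<in>UNIV. \<bar>x $ i\<bar> ^ p) has_derivative
      (\<lambda>h. \<Sum>i\<in>UNIV. (real p * (\<bar>x $ i\<bar> ^ (p - 1) * sgn (x $ i))) * h $ i)) (at x)"
  proof (intro has_derivative_sum)
    fix i
    have "((\<lambda>u::real. \<bar>u\<bar> ^ p) has_derivative (\<lambda>t. (real p * (\<bar>x $ i\<bar> ^ (p - 1) * sgn (x $ i))) * t)) (at (x $ i))"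
      using abs_pow_deriv[OF p, of "x $ i"] has_field_derivative_imp_has_derivative by blast
    then show "((\<lambda>x. \<bar>x $ i\<bar> ^ p) has_derivative (\<lambda>h. (real p * (\<bar>x $ i\<bar> ^ (p - 1) * sgn (x $ i))) * h $ i)) (at x)"
      using has_derivative_compose[OF bounded_linear_imp_has_derivative[OF bounded_linear_vec_nth[of i]]] by blast
  qed
  moreover have "(\<lambda>h. \<Sum>i\<in>UNIV. (real p * (\<bar>x $ i\<bar> ^ (p - 1) * sgn (x $ i))) * h $ i) = (\<lambda>h. real p * (sgnpow p x \<bullet> h))"
    by (simp add: sgnpow_def inner_vec_def sum_distrib_left mult_ac)
  ultimately show ?thesis unfolding Ssum_def by simp
qed

lemma sgnpow_self: assumes "p \<ge> 1" shows "sgnpow p x \<bullet> x = Ssum p x"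
proof -
  have "\<bar>u\<bar> ^ (p - 1) * sgn u * u = \<bar>u\<bar> ^ p" for u :: real
  proof -
    have "sgn u * u = \<bar>u\<bar>" by (simp add: abs_sgn mult.commute)
    then have "\<bar>u\<bar> ^ (p - 1) * sgn u * u = \<bar>u\<bar> ^ (p - 1) * \<bar>u\<bar>" by (simp add: mult.assoc)
    also have "\<dots> = \<bar>u\<bar> ^ p" using assms by (simp add: power_Suc2[symmetric])
    finally show ?thesis .
  qed
  then show ?thesis by (simp add: sgnpow_def inner_vec_def Ssum_def)
qed

lemma pnorm_Ssum: "pnorm p x = Ssum p x powr (1 / real p)"
  by (simp add: pnorm_def Ssum_def)

lemma pnorm_pow: assumes "r \<ge> 1" shows "pnorm p x ^ r = Ssum p x powr (real r / real p)"
proof (cases "Ssum p x = 0")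
  case True then show ?thesis using assms by (simp add: pnorm_Ssum)
next
  case False
  then show ?thesis by (simp add: pnorm_Ssum powr_power)
qed

lemma pnorm_powr_neg: assumes "p \<ge> 1" "0 < Ssum p x" shows "pnorm p x powr (- real p) = inverse (Ssum p x)"
  using assms by (simp add: pnorm_Ssum powr_powr powr_minus)

lemma adj_sym: "mset xs = mset ys \<Longrightarrow> adj_tensor r E s xs = adj_tensor r E s ys"
  unfolding adj_tensor_def by (metis mset_eq_length set_mset_mset)



lemma fobj_alt: assumes "r \<ge> 1"
  shows "fobj r p E s x = fact (r - 1) * tensor_form (adj_tensor r E s) r x * Ssum p x powr (- (real r / real p))"
  using assms by (simp add: fobj_def pnorm_pow powr_minus divide_inverse)

lemma alg1:
  fixes F G T V SG S Q c rr pp :: real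
  assumes "0 < S" "Q * Sr = 1" "c * pp = - rr" "pp \<noteq> 0" "F = rr * G" "IS * S = 1"
  shows "G * (T * (Q * (0 * L + pp * SG * c / S)) + rr * V * Q) = F / Sr * (V - T * IS * SG)"
proof -
  have Sr: "Sr \<noteq> 0" using assms(2) by auto
  have Q: "Q = 1 / Sr" using assms(2) Sr by (simp add: field_simps)
  have IS: "IS = 1 / S" using assms(6,1) by (simp add: field_simps)
  have a: "pp * SG * c / S = - (rr * SG * IS)"
  proof -
    have "pp * SG * c / S = (c * pp) * SG * (1 / S)" by simp
    also have "\<dots> = - (rr * SG * IS)" using assms(3) IS by simp
    finally show ?thesis .
  qed
  have "G * (T * (Q * (0 * L + pp * SG * c / S)) + rr * V * Q) = G * (T * (Q * (- (rr * SG * IS))) + rr * V * Q)"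
    by (simp only: a) simp
  also have "\<dots> = F * Q * (V - T * IS * SG)" unfolding assms(5) by (simp add: algebra_simps)
  also have "\<dots> = F / Sr * (V - T * IS * SG)" unfolding Q by simp
  finally show ?thesis .
qed

lemma fobj_deriv:
  fixes x :: "real^'n::finite"
  assumes r: "r = Suc m" and p: "p \<ge> 2" and x: "x \<noteq> 0"
  shows "(fobj r p E s has_derivative (\<lambda>h. gradf r p E s x \<bullet> h)) (at x)"
proof -
  let ?A = "adj_tensor r E s"
  let ?c = "- (real r / real p)"
  have T: "(tensor_form ?A r has_derivative (\<lambda>h. real r * (tensor_vec ?A r x \<bullet> h))) (at x)"
    unfolding r by (rule tensor_deriv) (rule adj_sym)
  have Sd: "(Ssum p has_derivative (\<lambda>h. real p * (sgnpow p x \<bullet> h))) (at x)"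
    using Ssum_deriv[OF p] .
  have Spos: "0 < Ssum p x" using Ssum_pos[OF x] p by simp
  have Pw: "((\<lambda>y. Ssum p y powr ?c) has_derivative
      (\<lambda>h. Ssum p x powr ?c * (0 * ln (Ssum p x) + real p * (sgnpow p x \<bullet> h) * ?c / Ssum p x))) (at x)"
    by (rule has_derivative_powr[OF Sd has_derivative_const Spos UNIV_I])
  have M: "((\<lambda>y. fact (r - 1) * (tensor_form ?A r y * Ssum p y powr ?c)) has_derivative
      (\<lambda>h. fact (r - 1) * (tensor_form ?A r x * (Ssum p x powr ?c * (0 * ln (Ssum p x) + real p * (sgnpow p x \<bullet> h) * ?c / Ssum p x))
          + real r * (tensor_vec ?A r x \<bullet> h) * Ssum p x powr ?c))) (at x)"
    by (rule has_derivative_mult_right[OF has_derivative_mult[OF T Pw]])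
  have eqf: "fobj r p E s = (\<lambda>y. fact (r - 1) * (tensor_form ?A r y * Ssum p y powr ?c))"
    using fobj_alt[of r p E s] r by (intro ext) (simp add: mult.assoc)
  have eqd: "(\<lambda>h. fact (r - 1) * (tensor_form ?A r x * (Ssum p x powr ?c * (0 * ln (Ssum p x) + real p * (sgnpow p x \<bullet> h) * ?c / Ssum p x))
          + real r * (tensor_vec ?A r x \<bullet> h) * Ssum p x powr ?c)) = (\<lambda>h. gradf r p E s x \<bullet> h)"
  proof
    fix h
    have Pr: "pnorm p x ^ r = Ssum p x powr (real r / real p)" by (rule pnorm_pow) (simp add: r)
    have Q: "Ssum p x powr ?c * pnorm p x ^ r = 1"
      unfolding Pr using Spos by (simp add: powr_minus)
    have IS: "pnorm p x powr (- real p) * Ssum p x = 1"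
      using Spos p by (simp add: pnorm_powr_neg)
    have cp: "?c * real p = - real r" using p by simp
    have F: "fact r = real r * fact (r - 1)" using r by simp
    show "fact (r - 1) * (tensor_form ?A r x * (Ssum p x powr ?c * (0 * ln (Ssum p x) + real p * (sgnpow p x \<bullet> h) * ?c / Ssum p x))
          + real r * (tensor_vec ?A r x \<bullet> h) * Ssum p x powr ?c) = gradf r p E s x \<bullet> h"
      unfolding gradf_def inner_scaleR_left inner_diff_left
      using alg1[OF Spos Q cp _ F IS] p by (simp add: mult.assoc)
  qed
  show ?thesis using M unfolding eqf eqd .
qed

lemma grad_euler:
  fixes x :: "real^'n::finite"
  assumes r: "r = Suc m" and p: "p \<ge> 1" and x: "x \<noteq> 0"
  shows "gradf r p E s x \<bullet> x = 0"
proof -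
  have Spos: "0 < Ssum p x" using Ssum_pos[OF x p] .
  have IS: "pnorm p x powr (- real p) * Ssum p x = 1"
    using Spos p by (simp add: pnorm_powr_neg)
  have V: "tensor_vec (adj_tensor r E s) r x \<bullet> x = tensor_form (adj_tensor r E s) r x"
    unfolding r by (rule tensor_euler)
  have "(tensor_form (adj_tensor r E s) r x * pnorm p x powr (- real p)) * Ssum p x = tensor_form (adj_tensor r E s) r x"
    using IS by (simp only: mult.assoc mult_1_right)
  then show ?thesis
    unfolding gradf_def inner_scaleR_left inner_diff_left sgnpow_self[OF p] V by simp
qed

lemma fobj_bounded:
  assumes r: "r = Suc m" and p: "p \<ge> 2"
  shows "\<exists>B. \<forall>y::real^'n::finite. norm y = 1 \<longrightarrow> fobj r p E s y \<le> B"
proof -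
  have "continuous_on (sphere (0::real^'n) 1) (fobj r p E s)"
  proof (rule continuous_at_imp_continuous_on, rule ballI)
    fix y :: "real^'n" assume "y \<in> sphere 0 1"
    then have "y \<noteq> 0" by auto
    then show "isCont (fobj r p E s) y"
      using fobj_deriv[OF r p] has_derivative_continuous by blast
  qed
  moreover have "sphere (0::real^'n) 1 \<noteq> {}" by simp
  ultimately obtain z where "z \<in> sphere (0::real^'n) 1" "\<forall>y\<in>sphere 0 1. fobj r p E s y \<le> fobj r p E s z"
    using continuous_attains_sup[OF compact_sphere] by metis
  then have "\<forall>y::real^'n. norm y = 1 \<longrightarrow> fobj r p E s y \<le> fobj r p E s z" by simp
  then show ?thesis by (rule exI)
qed



definition Dn :: "real^'n::finite \<Rightarrow> real^'n \<Rightarrow> real \<Rightarrow> real" where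
  "Dn x d a = 4 + a^2 * (d \<bullet> d) - a^2 * (x \<bullet> d)^2"
definition Nn :: "real^'n::finite \<Rightarrow> real^'n \<Rightarrow> real \<Rightarrow> real" where
  "Nn x d a = (2 - a * (x \<bullet> d))^2 - a^2 * (d \<bullet> d)"
definition Dd :: "real^'n::finite \<Rightarrow> real^'n \<Rightarrow> real \<Rightarrow> real" where
  "Dd x d a = 2 * a * (d \<bullet> d) - 2 * a * (x \<bullet> d)^2"
definition Nd :: "real^'n::finite \<Rightarrow> real^'n \<Rightarrow> real \<Rightarrow> real" where
  "Nd x d a = - 2 * (x \<bullet> d) * (2 - a * (x \<bullet> d)) - 2 * a * (d \<bullet> d)"

lemma xnext_eq: "xnext x d a = (Nn x d a / Dn x d a) *\<^sub>R x + (4 * a / Dn x d a) *\<^sub>R d"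
proof -
  have "norm (a *\<^sub>R d) ^ 2 = a^2 * (d \<bullet> d)" by (simp add: power2_norm_eq_inner power_mult_distrib)
  moreover have "(a * (x \<bullet> d))^2 = a^2 * (x \<bullet> d)^2" by (simp add: power_mult_distrib)
  ultimately show ?thesis unfolding xnext_def Dn_def Nn_def
    by (simp add: scaleR_add_right divide_inverse mult.commute)
qed

lemma cs_sq: assumes "norm x = 1" shows "(x \<bullet> d)^2 \<le> d \<bullet> d"
proof -
  have xx: "x \<bullet> x = 1" using assms by (simp add: norm_eq_1)
  show ?thesis using Cauchy_Schwarz_ineq[of x d] xx by simp
qed

lemma Dn_ge: assumes "norm x = 1" shows "Dn x d a \<ge> 4"
proof -
  have "0 \<le> a^2 * (d \<bullet> d - (x \<bullet> d)^2)" using cs_sq[OF assms, of d] by simp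
  then show ?thesis unfolding Dn_def by (simp add: algebra_simps)
qed

lemma Nn_le: assumes "norm x = 1" "0 \<le> a" "0 \<le> x \<bullet> d" shows "Nn x d a \<le> 4"
proof -
  have "0 \<le> a^2 * (d \<bullet> d - (x \<bullet> d)^2)" using cs_sq[OF assms(1), of d] by simp
  moreover have "0 \<le> a * (x \<bullet> d)" using assms by simp
  ultimately show ?thesis unfolding Nn_def by (simp add: algebra_simps power2_eq_square)
qed

lemma norm_comb: assumes "norm x = 1"
  shows "norm (A *\<^sub>R x + B *\<^sub>R d) ^ 2 = A^2 + 2 * A * B * (x \<bullet> d) + B^2 * (d \<bullet> d)"
proof -
  have xx: "x \<bullet> x = 1" using assms by (simp add: norm_eq_1)
  show ?thesis unfolding power2_norm_eq_inner
    by (simp add: inner_add_left inner_add_right xx inner_commute power2_eq_square algebra_simps)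
qed

lemma xnext_norm: assumes "norm x = 1" shows "norm (xnext x d a) = 1"
proof -
  let ?D = "Dn x d a" and ?N = "Nn x d a" and ?t = "x \<bullet> d" and ?w = "d \<bullet> d"
  have D: "?D \<noteq> 0" using Dn_ge[OF assms, of d a] by simp
  have key: "?N^2 + 2 * ?N * (4 * a) * ?t + (4 * a)^2 * ?w = ?D^2"
    unfolding Nn_def Dn_def by (simp add: power2_eq_square algebra_simps)
  have "norm (xnext x d a) ^ 2 = (?N / ?D)^2 + 2 * (?N / ?D) * (4 * a / ?D) * ?t + (4 * a / ?D)^2 * ?w"
    unfolding xnext_eq by (rule norm_comb[OF assms])
  also have "\<dots> = (?N^2 + 2 * ?N * (4 * a) * ?t + (4 * a)^2 * ?w) / ?D^2"
    using D by (simp add: field_simps power2_eq_square)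
  also have "\<dots> = 1" unfolding key using D by simp
  finally have "norm (xnext x d a) ^ 2 = 1" .
  then show ?thesis using norm_ge_zero[of "xnext x d a"] by (auto simp: power2_eq_1_iff)
qed

definition xder :: "real^'n::finite \<Rightarrow> real^'n \<Rightarrow> real \<Rightarrow> real^'n" where
  "xder x d a = ((Nd x d a * Dn x d a - Nn x d a * Dd x d a) / (Dn x d a)^2) *\<^sub>R x
      + ((4 * Dn x d a - 4 * a * Dd x d a) / (Dn x d a)^2) *\<^sub>R d"

lemma xnext_deriv: assumes "norm x = 1"
  shows "((\<lambda>a. xnext x d a) has_vector_derivative xder x d a) (at a)"
proof -
  have D: "Dn x d a \<noteq> 0" using Dn_ge[OF assms, of d a] by simp
  have dD: "((\<lambda>a. Dn x d a) has_real_derivative Dd x d a) (at a)"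
    unfolding Dn_def Dd_def by (rule derivative_eq_intros refl | simp)+
  have dN: "((\<lambda>a. Nn x d a) has_real_derivative Nd x d a) (at a)"
    unfolding Nn_def Nd_def by (rule derivative_eq_intros refl | simp add: algebra_simps)+
  have d1: "((\<lambda>a. Nn x d a / Dn x d a) has_real_derivative (Nd x d a * Dn x d a - Nn x d a * Dd x d a) / (Dn x d a)^2) (at a)"
    using DERIV_divide[OF dN dD D] by (simp add: power2_eq_square)
  have d4: "((\<lambda>a. 4 * a) has_real_derivative 4) (at a)"
    by (rule derivative_eq_intros refl | simp)+
  have d2: "((\<lambda>a. 4 * a / Dn x d a) has_real_derivative (4 * Dn x d a - 4 * a * Dd x d a) / (Dn x d a)^2) (at a)"
    using DERIV_divide[OF d4 dD D] by (simp add: power2_eq_square)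
  have "((\<lambda>a. (Nn x d a / Dn x d a) *\<^sub>R x + (4 * a / Dn x d a) *\<^sub>R d) has_vector_derivative xder x d a) (at a)"
    using has_vector_derivative_add[OF has_vector_derivative_scaleR[OF d1 has_vector_derivative_const[of x]]
      has_vector_derivative_scaleR[OF d2 has_vector_derivative_const[of d]]]
    unfolding xder_def by simp
  then show ?thesis unfolding xnext_eq .
qed



lemma key_ND: "Nn x d a - a * Nd x d a = Dn x d a"
  unfolding Nn_def Nd_def Dn_def by (simp add: power2_eq_square algebra_simps)

lemma coef_alg:
  fixes N D Dd Nd a :: real
  assumes D: "D \<noteq> 0" and k: "N - a * Nd = D"
  shows "(Dd * N - Nd * D) / (4 * D) * (N / D) + N / 4 * ((Nd * D - N * Dd) / D^2) = 0"
    and "(Dd * N - Nd * D) / (4 * D) * (4 * a / D) + N / 4 * ((4 * D - 4 * a * Dd) / D^2) = 1"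
proof -
  show "(Dd * N - Nd * D) / (4 * D) * (N / D) + N / 4 * ((Nd * D - N * Dd) / D^2) = 0"
    using D by (simp add: field_simps power2_eq_square)
  have "(Dd * N - Nd * D) / (4 * D) * (4 * a / D) + N / 4 * ((4 * D - 4 * a * Dd) / D^2)
      = (D * (N - a * Nd)) / D^2"
    using D by (simp add: field_simps power2_eq_square)
  also have "\<dots> = 1" using k D by (simp add: power2_eq_square)
  finally show "(Dd * N - Nd * D) / (4 * D) * (4 * a / D) + N / 4 * ((4 * D - 4 * a * Dd) / D^2) = 1" .
qed

lemma d_decomp:
  assumes "norm x = 1"
  shows "d = ((Dd x d a * Nn x d a - Nd x d a * Dn x d a) / (4 * Dn x d a)) *\<^sub>R xnext x d a
            + (Nn x d a / 4) *\<^sub>R xder x d a"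
proof -
  have D: "Dn x d a \<noteq> 0" using Dn_ge[OF assms, of d a] by simp
  note c = coef_alg[OF D key_ND]
  let ?l = "(Dd x d a * Nn x d a - Nd x d a * Dn x d a) / (4 * Dn x d a)"
  let ?m = "Nn x d a / 4"
  have "?l *\<^sub>R xnext x d a + ?m *\<^sub>R xder x d a
      = (?l * (Nn x d a / Dn x d a) + ?m * ((Nd x d a * Dn x d a - Nn x d a * Dd x d a) / (Dn x d a)^2)) *\<^sub>R x
      + (?l * (4 * a / Dn x d a) + ?m * ((4 * Dn x d a - 4 * a * Dd x d a) / (Dn x d a)^2)) *\<^sub>R d"
    unfolding xnext_eq xder_def by (simp add: scaleR_add_right scaleR_add_left)
  also have "\<dots> = d" unfolding c by simp
  finally show ?thesis by simp
qed

lemma grad_d: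
  fixes g :: "real^'n::finite"
  assumes "norm x = 1" and "g \<bullet> xnext x d a = 0"
  shows "g \<bullet> d = (Nn x d a / 4) * (g \<bullet> xder x d a)"
proof -
  have "g \<bullet> d = g \<bullet> (((Dd x d a * Nn x d a - Nd x d a * Dn x d a) / (4 * Dn x d a)) *\<^sub>R xnext x d a
            + (Nn x d a / 4) *\<^sub>R xder x d a)"
    using d_decomp[OF assms(1), of d a] by simp
  then show ?thesis using assms(2) by (simp add: inner_add_right)
qed

lemma xder0: "xder x d 0 = d - (x \<bullet> d) *\<^sub>R x"
  unfolding xder_def Nd_def Nn_def Dn_def Dd_def by (simp add: algebra_simps)

lemma xnext0: "xnext x d 0 = x"
  unfolding xnext_def by simp



lemma run_unit:
  assumes "csrh_run f g c1 c2 \<tau> \<epsilon> x d \<alpha> k" "j \<le> k"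
  shows "norm (x j) = 1"
  using assms(2)
proof (induction j)
  case 0 then show ?case using assms(1) unfolding csrh_run_def by simp
next
  case (Suc j)
  then have "j < k" by simp
  then have "x (Suc j) = xnext (x j) (d j) (\<alpha> j)" using assms(1) unfolding csrh_run_def by blast
  then show ?case using Suc xnext_norm by simp
qed

lemma quad_pos:
  fixes u v \<tau> :: real
  assumes "0 < v" "0 \<le> u" "1/4 < \<tau>"
  shows "0 < v^2 - u * v + \<tau> * u^2"
proof (cases "u = 0")
  case True then show ?thesis using assms by simp
next
  case False
  then have "0 < (\<tau> - 1/4) * u^2" using assms by simp
  moreover have "v^2 - u * v + \<tau> * u^2 = (v - u/2)^2 + (\<tau> - 1/4) * u^2"
    by (simp add: power2_eq_square algebra_simps)
  moreover have "0 \<le> (v - u/2)^2" by simp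
  ultimately show ?thesis by linarith
qed

lemma beta_ascent:
  fixes D Y g :: "real^'n::finite"
  assumes g: "g \<noteq> 0" and tau: "1/4 < \<tau>"
  shows "0 < g \<bullet> g + csrh_beta \<tau> \<epsilon> D Y g * (D \<bullet> g)"
proof -
  let ?q = "D \<bullet> Y"
  let ?bt = "((\<tau> * norm Y ^ 2 / ?q) *\<^sub>R D - Y) \<bullet> g / ?q"
  have gg: "0 < g \<bullet> g" using g by simp
  have "csrh_beta \<tau> \<epsilon> D Y g = 0 \<or> (csrh_beta \<tau> \<epsilon> D Y g = ?bt \<and> 0 < ?bt)"
    unfolding csrh_beta_def by auto
  then show ?thesis
  proof
    assume "csrh_beta \<tau> \<epsilon> D Y g = 0" then show ?thesis using gg by simp
  next
    assume b: "csrh_beta \<tau> \<epsilon> D Y g = ?bt \<and> 0 < ?bt"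
    then have q: "?q \<noteq> 0" by auto
    let ?z = "(D \<bullet> g) / ?q"
    have e: "?bt * (D \<bullet> g) = \<tau> * norm Y ^ 2 * ?z^2 - (Y \<bullet> g) * ?z"
      using q by (simp add: inner_diff_left power2_eq_square field_simps)
    have "(Y \<bullet> g) * ?z \<le> \<bar>Y \<bullet> g\<bar> * \<bar>?z\<bar>" by (metis abs_mult abs_ge_self)
    also have "\<dots> \<le> norm Y * norm g * \<bar>?z\<bar>"
      by (intro mult_right_mono Cauchy_Schwarz_ineq2) simp
    finally have c: "(Y \<bullet> g) * ?z \<le> (norm Y * \<bar>?z\<bar>) * norm g" by (simp add: mult_ac)
    have "0 < (norm g)^2 - (norm Y * \<bar>?z\<bar>) * norm g + \<tau> * (norm Y * \<bar>?z\<bar>)^2"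
      using quad_pos[of "norm g" "norm Y * \<bar>?z\<bar>" \<tau>] g tau by simp
    moreover have "g \<bullet> g = (norm g)^2" by (simp add: power2_norm_eq_inner)
    moreover have "\<tau> * norm Y ^ 2 * ?z^2 = \<tau> * (norm Y * \<bar>?z\<bar>)^2"
      by (simp only: power_mult_distrib power2_abs mult.assoc)
    ultimately have P: "0 < g \<bullet> g - (norm Y * \<bar>?z\<bar>) * norm g + \<tau> * norm Y ^ 2 * ?z^2" by linarith
    have "g \<bullet> g + csrh_beta \<tau> \<epsilon> D Y g * (D \<bullet> g) = g \<bullet> g + (\<tau> * norm Y ^ 2 * ?z^2 - (Y \<bullet> g) * ?z)"
      unfolding b[THEN conjunct1] e ..
    then show ?thesis using P c by linarith
  qed
qed



theorem theorem3p5: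
  fixes r p :: nat and E :: "'n::finite set set" and s :: "'n set \<Rightarrow> real"
    and c1 c2 \<tau> \<epsilon> :: real and x d :: "nat \<Rightarrow> real^'n" and \<alpha> :: "nat \<Rightarrow> real" and k :: nat
  assumes "r \<ge> 2" and "p \<ge> 2"
    and "uniform_weighted_hypergraph r E s"
    and "csrh_run (fobj r p E s) (gradf r p E s) c1 c2 \<tau> \<epsilon> x d \<alpha> k"
    and "gradf r p E s (x k) \<noteq> 0"
    and "0 < c1" and "c1 < c2" and "c2 < 1"
  shows "\<exists>a>0. fobj r p E s (xnext (x k) (d k) a)
                 \<ge> fobj r p E s (x k) + c1 * a * (gradf r p E s (x k) \<bullet> d k)
            \<and> gradf r p E s (xnext (x k) (d k) a) \<bullet> d k \<le> c2 * (gradf r p E s (x k) \<bullet> d k)"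
proof -
  define m where "m = r - 1"
  have r: "r = Suc m" using assms(1) unfolding m_def by simp
  have p: "p \<ge> 2" by (rule assms(2))
  have p1: "p \<ge> 1" using p by simp
  note run = assms(4)
  define G where "G = gradf r p E s"
  define F where "F = fobj r p E s"
  define xk where "xk = x k"
  define dk where "dk = d k"
  have unit: "norm xk = 1" unfolding xk_def using run_unit[OF run, of k] by simp
  have xk0: "xk \<noteq> 0" using unit by auto
  have Gk: "G xk \<noteq> 0" using assms(5) unfolding G_def xk_def .
  have eul: "G y \<bullet> y = 0" if "norm y = 1" for y
    unfolding G_def by (rule grad_euler[OF r p1]) (use that in auto)
  have tau: "1/4 < \<tau>" using run unfolding csrh_run_def by simp
  have td: "0 \<le> xk \<bullet> dk \<and> 0 < G xk \<bullet> dk"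
  proof (cases k)
    case 0
    then have "dk = G xk" using run unfolding csrh_run_def dk_def xk_def G_def by simp
    then show ?thesis using eul[OF unit] Gk by (simp add: inner_commute)
  next
    case (Suc j)
    then have jk: "j < k" by simp
    define \<beta> where "\<beta> = csrh_beta \<tau> \<epsilon> (xk - x j) (G xk - G (x j)) (G xk)"
    have dk: "dk = G xk + \<beta> *\<^sub>R (xk - x j)"
      using run jk Suc unfolding csrh_run_def dk_def xk_def G_def \<beta>_def by auto
    have b0: "0 \<le> \<beta>" unfolding \<beta>_def csrh_beta_def by simp
    have uj: "norm (x j) = 1" using run_unit[OF run, of j] jk by simp
    have "xk \<bullet> x j \<le> 1" using norm_cauchy_schwarz[of xk "x j"] unit uj by simp
    moreover have "xk \<bullet> xk = 1" using unit by (simp add: norm_eq_1)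
    ultimately have "0 \<le> \<beta> * (xk \<bullet> xk - xk \<bullet> x j)" using b0 by simp
    moreover have "xk \<bullet> dk = xk \<bullet> G xk + \<beta> * (xk \<bullet> xk - xk \<bullet> x j)"
      unfolding dk by (simp add: inner_add_right inner_diff_right)
    moreover have "xk \<bullet> G xk = 0" using eul[OF unit] by (simp add: inner_commute)
    ultimately have t: "0 \<le> xk \<bullet> dk" by simp
    have "G xk \<bullet> dk = G xk \<bullet> G xk + \<beta> * ((xk - x j) \<bullet> G xk)"
      unfolding dk by (simp add: inner_add_right inner_commute)
    moreover have "0 < G xk \<bullet> G xk + \<beta> * ((xk - x j) \<bullet> G xk)"
      unfolding \<beta>_def by (rule beta_ascent[OF Gk tau])
    ultimately show ?thesis using t by simp
  qed
  define Gd where "Gd = G xk \<bullet> dk"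
  have Gd: "0 < Gd" using td unfolding Gd_def by simp
  define y where "y = (\<lambda>a. xnext xk dk a)"
  have yu: "norm (y a) = 1" for a unfolding y_def by (rule xnext_norm[OF unit])
  have y0: "y 0 = xk" unfolding y_def by (rule xnext0)
  define phi' where "phi' = (\<lambda>a. G (y a) \<bullet> xder xk dk a)"
  have dphi: "((\<lambda>a. F (y a)) has_real_derivative phi' a) (at a)" for a
  proof -
    have fy: "(F has_derivative (\<lambda>h. G (y a) \<bullet> h)) (at (y a))"
      unfolding F_def G_def by (rule fobj_deriv[OF r p]) (use yu[of a] in auto)
    have yd: "(y has_derivative (\<lambda>s. s *\<^sub>R xder xk dk a)) (at a)"
      using xnext_deriv[OF unit, of dk a] unfolding y_def has_vector_derivative_def .
    have "((\<lambda>a. F (y a)) has_derivative (\<lambda>s. G (y a) \<bullet> (s *\<^sub>R xder xk dk a))) (at a)"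
      by (rule has_derivative_compose[OF yd fy])
    moreover have "(\<lambda>s. G (y a) \<bullet> (s *\<^sub>R xder xk dk a)) = (*) (phi' a)"
      unfolding phi'_def by (auto simp: mult.commute)
    ultimately show ?thesis unfolding has_field_derivative_def by simp
  qed
  define psi where "psi = (\<lambda>a. F (y a) - F xk - c1 * a * Gd)"
  have dpsi: "(psi has_real_derivative (phi' a - c1 * Gd)) (at a)" for a
  proof -
    have "((\<lambda>a. c1 * a * Gd) has_real_derivative c1 * Gd) (at a)"
      by (rule derivative_eq_intros refl | simp)+
    then show ?thesis unfolding psi_def
      using DERIV_diff[OF DERIV_diff[OF dphi DERIV_const] ] by simp
  qed
  have psi0: "psi 0 = 0" unfolding psi_def using y0 by simp
  have phi'0: "phi' 0 = Gd"
  proof -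
    have "phi' 0 = G xk \<bullet> (dk - (xk \<bullet> dk) *\<^sub>R xk)" unfolding phi'_def y0 xder0 ..
    also have "\<dots> = Gd" using eul[OF unit] unfolding Gd_def by (simp add: inner_diff_right)
    finally show ?thesis .
  qed
  have dpsi0: "0 < phi' 0 - c1 * Gd" unfolding phi'0 using Gd assms(6,7,8) by simp
  obtain B where B: "\<And>z::real^'n. norm z = 1 \<Longrightarrow> F z \<le> B"
    using fobj_bounded[OF r p, of E s] unfolding F_def by blast
  define A where "A = (B - F xk) / (c1 * Gd) + 1"
  have BF: "0 \<le> B - F xk" using B[OF unit] by simp
  have c1G: "0 < c1 * Gd" using Gd assms(6) by simp
  have A1: "1 \<le> A" unfolding A_def using BF c1G by simp
  have psiA: "psi A < 0"
  proof -
    have "c1 * A * Gd = (c1 * Gd) * ((B - F xk) / (c1 * Gd)) + c1 * Gd" unfolding A_def by (simp add: algebra_simps)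
    also have "(c1 * Gd) * ((B - F xk) / (c1 * Gd)) = B - F xk" using c1G by (metis less_irrefl times_divide_eq_right nonzero_mult_div_cancel_left)
    finally have "c1 * A * Gd = (B - F xk) + c1 * Gd" .
    then show ?thesis unfolding psi_def using B[OF yu[of A]] c1G by simp
  qed
  obtain \<delta> where \<delta>: "\<delta> > 0" "\<And>h. h > 0 \<Longrightarrow> h < \<delta> \<Longrightarrow> psi 0 < psi (0 + h)"
    using DERIV_pos_inc_right[OF dpsi dpsi0] by blast
  have cont: "continuous_on {0..A} psi"
    by (rule continuous_at_imp_continuous_on) (use dpsi DERIV_isCont in blast)
  obtain mm where mm: "mm \<in> {0..A}" "\<And>z. z \<in> {0..A} \<Longrightarrow> psi z \<le> psi mm"
    using continuous_attains_sup[OF compact_Icc _ cont] A1 by auto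
  define h0 where "h0 = min (\<delta>/2) (A/2)"
  have h0: "0 < h0" "h0 < \<delta>" "h0 \<in> {0..A}" unfolding h0_def using \<delta>(1) A1 by auto
  have "0 < psi h0" using \<delta>(2)[OF h0(1,2)] psi0 by simp
  then have pm: "0 < psi mm" using mm(2)[OF h0(3)] by simp
  have mpos: "0 < mm" using pm psi0 mm(1) by (cases "mm = 0") auto
  have mA: "mm < A" using pm psiA mm(1) by (cases "mm = A") auto
  have dd: "0 < min mm (A - mm)" using mpos mA by simp
  have le: "\<forall>z. \<bar>mm - z\<bar> < min mm (A - mm) \<longrightarrow> psi z \<le> psi mm"
  proof (intro allI impI)
    fix z assume "\<bar>mm - z\<bar> < min mm (A - mm)"
    then have "z \<in> {0..A}" by (auto simp: abs_less_iff)
    then show "psi z \<le> psi mm" by (rule mm(2))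
  qed
  have "phi' mm - c1 * Gd = 0" by (rule DERIV_local_max[OF dpsi dd le])
  then have phim: "phi' mm = c1 * Gd" by simp
  have Nle: "Nn xk dk mm \<le> 4" using Nn_le[OF unit _ ] mpos td by simp
  have c2: "G (y mm) \<bullet> dk = (Nn xk dk mm / 4) * phi' mm"
    unfolding phi'_def y_def
    by (rule grad_d[OF unit]) (use eul[OF yu[of mm]] in \<open>simp add: y_def inner_commute\<close>)
  have "Nn xk dk mm * (c1 * Gd) \<le> 4 * (c1 * Gd)" using Nle c1G by (intro mult_right_mono) auto
  then have "(Nn xk dk mm / 4) * (c1 * Gd) \<le> c1 * Gd" by simp
  then have "G (y mm) \<bullet> dk < c2 * Gd" unfolding c2 phim using assms(7) Gd by (smt (verit) mult_strict_right_mono)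
  moreover have "F (y mm) \<ge> F xk + c1 * mm * Gd" using pm unfolding psi_def by simp
  ultimately show ?thesis using mpos
    unfolding F_def G_def y_def xk_def dk_def Gd_def by (intro exI[of _ mm]) auto
qed

end
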